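(* Let $u$ be a vertex of an oriented graph $D$. (a) If $u$ is not a weak king, then $D$ contains a vertex $v$ such that $v(1\text{-}0)u$, $v$ is not a weak serf, and the arc $vu$ lies in no intransitive triple of $D$. (b) If $u$ is not a weak serf, then $D$ contains a vertex $w$ such that $u(1\text{-}0)w$, $w$ is not a weak king, and the arc $uw$ lies in no intransitive triple of $D$.
   Context: An oriented graph is a digraph with no loops and no pair of symmetric arcs. For vertices $u,v$ write $u(1\text{-}0)v$ if there is an arc from $u$ to $v$, and $u(0\text{-}0)v$ if there is no arc between $u$ and $v$. A vertex $v$ is weakly reachable within two steps from $u$ if $u(1\text{-}0)v$, or $u(0\text{-}0)v$, or for some vertex $w$ one has $u(1\text{-}0)w(1\text{-}0)v$, or $u(1\text{-}0)w(0\text{-}0)v$, or $u(0\text{-}0)w(1\text{-}0)v$. A vertex $u$ is a weak king if every other vertex is weakly reachable within two steps from $u$, and a weak serf if $u$ is weakly reachable within two steps from every other vertex. A triple is the induced oriented subgraph on three distinct vertices; it is intransitive if it is a directed 3-cycle $x(1\text{-}0)y(1\text{-}0)z(1\text{-}0)x$, or a directed path $x(1\text{-}0)y(1\text{-}0)z$ with $x(0\text{-}0)z$; all other triples are transitive. *)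

theory Defs
  imports Main
begin

text \<open>An oriented graph D = (V, A): finite vertex set V, arc relation A with
  A x y meaning x(1-0)y; no loops, no symmetric pairs, arcs inside V.\<close>

definition oriented_graph :: "'a set \<Rightarrow> ('a \<Rightarrow> 'a \<Rightarrow> bool) \<Rightarrow> bool" where
  "oriented_graph V A \<longleftrightarrow> finite V \<and>
     (\<forall>x y. A x y \<longrightarrow> x \<in> V \<and> y \<in> V) \<and>
     (\<forall>x. \<not> A x x) \<and>
     (\<forall>x y. A x y \<longrightarrow> \<not> A y x)"

definition nonadj :: "('a \<Rightarrow> 'a \<Rightarrow> bool) \<Rightarrow> 'a \<Rightarrow> 'a \<Rightarrow> bool" where
  "nonadj A x y \<longleftrightarrow> x \<noteq> y \<and> \<not> A x y \<and> \<not> A y x"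

definition weakly_reach2 :: "'a set \<Rightarrow> ('a \<Rightarrow> 'a \<Rightarrow> bool) \<Rightarrow> 'a \<Rightarrow> 'a \<Rightarrow> bool" where
  "weakly_reach2 V A u v \<longleftrightarrow>
     A u v \<or> nonadj A u v \<or>
     (\<exists>w\<in>V. (A u w \<and> A w v) \<or> (A u w \<and> nonadj A w v) \<or> (nonadj A u w \<and> A w v))"

definition weak_king :: "'a set \<Rightarrow> ('a \<Rightarrow> 'a \<Rightarrow> bool) \<Rightarrow> 'a \<Rightarrow> bool" where
  "weak_king V A u \<longleftrightarrow> (\<forall>v\<in>V. v \<noteq> u \<longrightarrow> weakly_reach2 V A u v)"

definition weak_serf :: "'a set \<Rightarrow> ('a \<Rightarrow> 'a \<Rightarrow> bool) \<Rightarrow> 'a \<Rightarrow> bool" where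
  "weak_serf V A u \<longleftrightarrow> (\<forall>v\<in>V. v \<noteq> u \<longrightarrow> weakly_reach2 V A v u)"

definition intransitive_triple :: "'a set \<Rightarrow> ('a \<Rightarrow> 'a \<Rightarrow> bool) \<Rightarrow> 'a \<Rightarrow> 'a \<Rightarrow> 'a \<Rightarrow> bool" where
  "intransitive_triple V A x y z \<longleftrightarrow>
     x \<in> V \<and> y \<in> V \<and> z \<in> V \<and> x \<noteq> y \<and> y \<noteq> z \<and> x \<noteq> z \<and>
     ((A x y \<and> A y z \<and> A z x) \<or> (A x y \<and> A y z \<and> nonadj A x z))"

definition arc_in_intransitive_triple :: "'a set \<Rightarrow> ('a \<Rightarrow> 'a \<Rightarrow> bool) \<Rightarrow> 'a \<Rightarrow> 'a \<Rightarrow> bool" where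
  "arc_in_intransitive_triple V A a b \<longleftrightarrow>
     (\<exists>x y z. intransitive_triple V A x y z \<and> a \<in> {x, y, z} \<and> b \<in> {x, y, z})"

end

theory Submission
  imports Defs
begin

theorem lemma1:
  fixes V :: "'a set" and A :: "'a \<Rightarrow> 'a \<Rightarrow> bool" and u :: 'a
  assumes "oriented_graph V A" and "u \<in> V"
  shows "(\<not> weak_king V A u \<longrightarrow>
            (\<exists>v\<in>V. A v u \<and> \<not> weak_serf V A v \<and> \<not> arc_in_intransitive_triple V A v u))
       \<and> (\<not> weak_serf V A u \<longrightarrow>
            (\<exists>w\<in>V. A u w \<and> \<not> weak_king V A w \<and> \<not> arc_in_intransitive_triple V A u w))"
proof (intro conjI impI)
  have irr: "\<And>x. \<not> A x x" and asym: "\<And>x y. A x y \<Longrightarrow> \<not> A y x"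
    and inV: "\<And>x y. A x y \<Longrightarrow> x \<in> V \<and> y \<in> V"
    using assms(1) unfolding oriented_graph_def by auto
  assume "\<not> weak_king V A u"
  then obtain x where x: "x \<in> V" "x \<noteq> u" "\<not> weakly_reach2 V A u x"
    unfolding weak_king_def by auto
  have xu: "A x u" using x unfolding weakly_reach2_def nonadj_def by auto
  have o: "\<And>w. A u w \<Longrightarrow> A x w" using x inV xu asym
    unfolding weakly_reach2_def nonadj_def by metis
  have n: "\<And>w. nonadj A u w \<Longrightarrow> \<not> A w x" using x inV
    unfolding weakly_reach2_def by metis
  have "\<not> weak_serf V A x" using x assms(2) unfolding weak_serf_def by auto
  moreover have "\<not> arc_in_intransitive_triple V A x u"
    unfolding arc_in_intransitive_triple_def intransitive_triple_def
    using o n asym xu irr unfolding nonadj_def by (clarsimp; metis)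
  ultimately show "\<exists>v\<in>V. A v u \<and> \<not> weak_serf V A v \<and> \<not> arc_in_intransitive_triple V A v u"
    using x xu by blast
next
  have irr: "\<And>x. \<not> A x x" and asym: "\<And>x y. A x y \<Longrightarrow> \<not> A y x"
    and inV: "\<And>x y. A x y \<Longrightarrow> x \<in> V \<and> y \<in> V"
    using assms(1) unfolding oriented_graph_def by auto
  assume "\<not> weak_serf V A u"
  then obtain x where x: "x \<in> V" "x \<noteq> u" "\<not> weakly_reach2 V A x u"
    unfolding weak_serf_def by auto
  have xu: "A u x" using x unfolding weakly_reach2_def nonadj_def by auto
  have o: "\<And>w. A x w \<Longrightarrow> A u w" using x inV xu asym
    unfolding weakly_reach2_def nonadj_def by metis
  have n: "\<And>w. nonadj A x w \<Longrightarrow> \<not> A w u" using x inV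
    unfolding weakly_reach2_def nonadj_def by metis
  have "\<not> weak_king V A x" using x assms(2) unfolding weak_king_def by auto
  moreover have "\<not> arc_in_intransitive_triple V A u x"
    unfolding arc_in_intransitive_triple_def intransitive_triple_def
    using o n asym xu irr unfolding nonadj_def by (clarsimp; metis)
  ultimately show "\<exists>w\<in>V. A u w \<and> \<not> weak_king V A w \<and> \<not> arc_in_intransitive_triple V A u w"
    using x xu by blast
qed

end
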